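(* Let $L\le U$ be integers with $U-L+1$ a power of $2$, and let $\mathcal{T}(L,U)$ be the dyadic tree on leaves $L,\ldots,U$. Fix a leaf $i\in[L,U]$, and let $[l_1,u_1],[l_2,u_2],\ldots$ be all intervals $[l,u]$ indexing nodes of $\mathcal{T}(L,U)$ such that $i\in[l,u]$ and the node indexed by $[l,u]$ is a left node, listed in ascending order of $u_k-l_k$. Then for every $k$, $u_k-i\ge 2^{k-1}-1$.
   Context: The dyadic tree $\mathcal{T}(L,U)$ (for $U-L+1$ a power of $2$) is the complete binary tree whose leaves are indexed by the integers $L,L+1,\ldots,U$ in order, and in which, whenever two sibling nodes are indexed by intervals $[l_1,u_1]$ and $[u_1+1,u_2]$, their parent is indexed by $[l_1,u_2]$ (a leaf $m$ is identified with the interval $[m,m]$). A node whose indexing interval precedes its sibling's indexing interval is a left node; its sibling is a right node (the root has no sibling and is neither). *)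

theory Defs
  imports Main
begin

text \<open>The dyadic tree with 2^n leaves L, ..., L + 2^n - 1. Nodes are identified with
  their indexing intervals (l,u).\<close>

fun dyadic_nodes :: "nat \<Rightarrow> int \<Rightarrow> (int \<times> int) set" where
  "dyadic_nodes 0 L = {(L, L)}"
| "dyadic_nodes (Suc n) L =
     insert (L, L + 2^(Suc n) - 1) (dyadic_nodes n L \<union> dyadic_nodes n (L + 2^n))"

text \<open>Left nodes: those nodes whose interval precedes that of their sibling, i.e. the
  left child of some internal node. The root is not a left node.\<close>

fun dyadic_left_nodes :: "nat \<Rightarrow> int \<Rightarrow> (int \<times> int) set" where
  "dyadic_left_nodes 0 L = {}"
| "dyadic_left_nodes (Suc n) L =
     insert (L, L + 2^n - 1) (dyadic_left_nodes n L \<union> dyadic_left_nodes n (L + 2^n))"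

end

theory Submission
  imports Defs
begin

lemma left_fin: "finite (dyadic_left_nodes n L)"
  by (induction n arbitrary: L) auto

lemma left_bounds: "p \<in> dyadic_left_nodes n L \<Longrightarrow>
   L \<le> fst p \<and> snd p \<le> L + 2^n - 1 \<and> 2 * (snd p - fst p + 1) \<le> 2^n"
proof (induction n arbitrary: L p)
  case 0 then show ?case by simp
next
  case (Suc n)
  have pos: "(0::int) < 2^n" by simp
  from Suc.prems consider "p = (L, L + 2^n - 1)" | "p \<in> dyadic_left_nodes n L"
    | "p \<in> dyadic_left_nodes n (L + 2^n)" by auto
  then show ?case
  proof cases
    case 1 then show ?thesis using pos by (auto simp: algebra_simps)
  next
    case 2 from Suc.IH[OF 2] show ?thesis using pos by (simp add: power_Suc; smt (verit))
  next
    case 3 from Suc.IH[OF 3] show ?thesis using pos by (simp add: power_Suc; smt (verit))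
  qed
qed

definition cont :: "nat \<Rightarrow> int \<Rightarrow> int \<Rightarrow> (int \<times> int) set" where
  "cont n L i = {p \<in> dyadic_left_nodes n L. fst p \<le> i \<and> i \<le> snd p}"

lemma cont_fin: "finite (cont n L i)"
  unfolding cont_def using left_fin by auto

lemma cont_left: "L \<le> i \<Longrightarrow> i \<le> L + 2^n - 1 \<Longrightarrow> cont (Suc n) L i = insert (L, L + 2^n - 1) (cont n L i)"
proof -
  assume a0: "L \<le> i" and a: "i \<le> L + 2^n - 1"
  have "\<And>q. q \<in> dyadic_left_nodes n (L + 2^n) \<Longrightarrow> \<not> (fst q \<le> i)"
    using left_bounds[of _ n "L + 2^n"] a by fastforce
  then show ?thesis unfolding cont_def using a0 a by auto
qed

lemma cont_right: "L + 2^n \<le> i \<Longrightarrow> cont (Suc n) L i = cont n (L + 2^n) i"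
proof -
  assume a: "L + 2^n \<le> i"
  have "\<And>q. q \<in> dyadic_left_nodes n L \<Longrightarrow> \<not> (i \<le> snd q)"
    using left_bounds[of _ n L] a by fastforce
  moreover have "\<not> (i \<le> L + 2^n - 1)" using a by simp
  ultimately show ?thesis unfolding cont_def by auto
qed

lemma top_notin: "(L, L + 2^n - 1) \<notin> dyadic_left_nodes n L"
  using left_bounds[of "(L, L + 2^n - 1)" n L] by (auto simp: power_Suc)

lemma lemD: "L \<le> i \<Longrightarrow> i \<le> L + 2^n - 1 \<Longrightarrow>
   card (cont n L i) \<le> n \<and> 2 ^ card (cont n L i) - 1 \<le> L + 2^n - 1 - i"
proof (induction n arbitrary: L)
  case 0 then show ?case by (simp add: cont_def)
next
  case (Suc n)
  show ?case
  proof (cases "i \<le> L + 2^n - 1")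
    case True
    note IH = Suc.IH[OF Suc.prems(1) True]
    have nt: "(L, L + 2^n - 1) \<notin> cont n L i" using top_notin unfolding cont_def by auto
    have c: "card (cont (Suc n) L i) = Suc (card (cont n L i))"
      using cont_left[OF Suc.prems(1) True] nt cont_fin by simp
    have pw: "(2::int) ^ card (cont n L i) \<le> 2 ^ n" using IH by (simp add: power_increasing)
    have "2 ^ Suc (card (cont n L i)) - 1 \<le> L + 2^Suc n - 1 - i"
      unfolding power_Suc using IH pw by linarith
    then show ?thesis using c IH by simp
  next
    case False
    have "(L + 2^n) + 2^n - 1 = L + 2^Suc n - 1" by simp
    with Suc.IH[of "L + 2^n"] False Suc.prems have IH:
      "card (cont n (L + 2^n) i) \<le> n \<and> 2 ^ card (cont n (L + 2^n) i) - 1 \<le> L + 2^Suc n - 1 - i"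
      by (metis not_le zle_diff1_eq add_diff_eq)
    then show ?thesis using cont_right[of L n i] False by simp
  qed
qed

definition smaller :: "nat \<Rightarrow> int \<Rightarrow> int \<Rightarrow> int \<times> int \<Rightarrow> (int \<times> int) set" where
  "smaller n L i p = {q \<in> cont n L i. snd q - fst q \<le> snd p - fst p \<and> q \<noteq> p}"

lemma lemC: "p \<in> cont n L i \<Longrightarrow> 2 ^ card (smaller n L i p) - 1 \<le> snd p - i"
proof (induction n arbitrary: L)
  case 0 then show ?case by (simp add: cont_def)
next
  case (Suc n)
  have pi: "fst p \<le> i" "i \<le> snd p" "p \<in> dyadic_left_nodes (Suc n) L"
    using Suc.prems by (auto simp: cont_def)
  have Li: "L \<le> i" "i \<le> L + 2^Suc n - 1"
    using left_bounds[OF pi(3)] pi by auto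
  show ?case
  proof (cases "i \<le> L + 2^n - 1")
    case True
    note cl = cont_left[OF Li(1) True]
    show ?thesis
    proof (cases "p = (L, L + 2^n - 1)")
      case pT: True
      have "smaller (Suc n) L i p = cont n L i"
      proof -
        have "\<And>q. q \<in> cont n L i \<Longrightarrow> snd q - fst q \<le> snd p - fst p \<and> q \<noteq> p"
          using left_bounds[of _ n L] top_notin[of L n] pT unfolding cont_def by fastforce
        then show ?thesis unfolding smaller_def cl using pT by auto
      qed
      then show ?thesis using lemD[OF Li(1) True] pT by simp
    next
      case False
      then have pA: "p \<in> cont n L i" using Suc.prems cl by auto
      have "smaller (Suc n) L i p = smaller n L i p"
      proof -
        have "\<not> (L + 2^n - 1 - L \<le> snd p - fst p)"
          using left_bounds[of p n L] pA unfolding cont_def by auto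
        then show ?thesis unfolding smaller_def cl by auto
      qed
      then show ?thesis using Suc.IH[OF pA] by simp
    qed
  next
    case False
    then have pB: "p \<in> cont n (L + 2^n) i" using Suc.prems cont_right[of L n i] by simp
    have "smaller (Suc n) L i p = smaller n (L + 2^n) i p"
      unfolding smaller_def using cont_right[of L n i] False by simp
    then show ?thesis using Suc.IH[OF pB] by simp
  qed
qed

theorem lemma3:
  fixes L U i :: int and n :: nat and xs :: "(int \<times> int) list"
  assumes "L \<le> U" and "U - L + 1 = 2 ^ n"
    and "L \<le> i" and "i \<le> U"
    and "set xs = {(l, u) \<in> dyadic_left_nodes n L. l \<le> i \<and> i \<le> u}"
    and "distinct xs"
    and "sorted_wrt (\<lambda>a b. snd a - fst a \<le> snd b - fst b) xs"
  shows "\<forall>k. 1 \<le> k \<and> k \<le> length xs \<longrightarrow> snd (xs ! (k - 1)) - i \<ge> 2 ^ (k - 1) - 1"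
proof (intro allI impI)
  fix k assume k: "1 \<le> k \<and> k \<le> length xs"
  have sx: "set xs = cont n L i" using assms(5) unfolding cont_def by auto
  define p where "p = xs ! (k - 1)"
  have pin: "p \<in> cont n L i" using k sx unfolding p_def by (metis Suc_le_eq diff_less less_le_trans nth_mem zero_less_one le_less_trans less_numeral_extra(1) order.strict_trans1) 
  have sub: "set (take (k - 1) xs) \<subseteq> smaller n L i p"
  proof
    fix q assume "q \<in> set (take (k - 1) xs)"
    then obtain j where j: "j < k - 1" "q = xs ! j" using k
      by (auto simp: in_set_conv_nth)
    have "snd q - fst q \<le> snd p - fst p"
    proof -
      have "j < k - 1" "k - 1 < length xs" using j k by auto
      then show ?thesis using assms(7) j unfolding p_def sorted_wrt_iff_nth_less by blast
    qed
    moreover have "q \<noteq> p"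
    proof -
      have "j < length xs" "k - 1 < length xs" "j \<noteq> k - 1" using j k by auto
      then show ?thesis using assms(6) j unfolding p_def by (simp add: nth_eq_iff_index_eq)
    qed
    moreover have "q \<in> cont n L i" using j k sx by auto
    ultimately show "q \<in> smaller n L i p" unfolding smaller_def by simp
  qed
  have "k - 1 = card (set (take (k - 1) xs))"
    using assms(6) k by (auto simp: distinct_card min_def)
  also have "\<dots> \<le> card (smaller n L i p)"
    using sub cont_fin by (intro card_mono) (auto simp: smaller_def)
  finally have pw: "(2::int) ^ (k - 1) \<le> 2 ^ card (smaller n L i p)" by (simp add: power_increasing)
  show "snd (xs ! (k - 1)) - i \<ge> 2 ^ (k - 1) - 1"
    using lemC[OF pin] pw unfolding p_def by linarith
qed

end
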